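(* Let $D$ be a tournament missing disjoint paths of length 2 and let $C=a_1b_1c_1,\dots,a_kb_kc_k$ be a double cycle in $\Delta(D)$. Writing $v^-$ and $v^{++}$ for $N^-_{D[K(C)]}(v)$ and $N^{++}_{D[K(C)]}(v)$, for every $t\in\{1,\dots,k\}$ (indices modulo $k$): (1) if $c_t\notin a_t^-$, then $|a_t^{++}|=|a_t^-|$ when $b_{t+1}\in a_t^-$, and $|a_t^{++}|=|a_t^-|-1$ otherwise; (2) if $a_t\notin c_t^-$, then $|c_t^{++}|=|c_t^-|$ when $b_{t+1}\in c_t^-$, and $|c_t^{++}|=|c_t^-|-1$ otherwise; (3) $|b_t^{++}|=|b_t^-|+1$ when $b_{t+1}\in b_t^-$, and $|b_t^{++}|=|b_t^-|$ otherwise.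
   Context: All digraphs are finite oriented graphs; $D[X]$ is the induced subdigraph. $N^+_H(v)$, $N^-_H(v)$ are out/in-neighborhoods in $H$; $N^{++}_H(v)$ is the set of vertices $w\notin N_H^+(v)\cup\{v\}$ with $u\to w$ in $H$ for some $u\in N_H^+(v)$. A missing edge is a pair of distinct non-adjacent vertices; the missing graph is formed by the missing edges. $D$ is a tournament missing disjoint paths of length 2 if its missing graph is a vertex-disjoint union of paths each with exactly two edges. For missing edges $\{x,y\},\{a,b\}$, $\{x,y\}$ loses to $\{a,b\}$ (written $xy\to ab$) if the endpoints can be labelled so that $x\to a$, $b\notin N^+(x)\cup N^{++}(x)$, $y\to b$, $a\notin N^+(y)\cup N^{++}(y)$ (neighborhoods in $D$). $\Delta(D)$ has the missing edges as vertices and arcs $(e,e')$ whenever $e$ loses to $e'$. For missing paths $abc$, $xyz$, $abc\to xyz$ means each of $ab,bc$ loses to each of $xy,yz$. A double cycle is a sequence $C=a_1b_1c_1,\dots,a_kb_kc_k$ ($k\ge2$) of distinct missing paths of length 2 (components of the missing graph, edges $a_ib_i,b_ic_i$) with $a_ib_ic_i\to a_{i+1}b_{i+1}c_{i+1}$ for all $i$, indices modulo $k$. $K(C)=\{a_i,b_i,c_i:1\le i\le k\}$. *)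

theory Defs
  imports Main
begin

text \<open>A digraph is given by a vertex set V and an arc relation A (A x y means x -> y).\<close>

definition oriented_graph :: "'a set \<Rightarrow> ('a \<Rightarrow> 'a \<Rightarrow> bool) \<Rightarrow> bool" where
  "oriented_graph V A \<longleftrightarrow> finite V \<and> (\<forall>x y. A x y \<longrightarrow> x \<in> V \<and> y \<in> V)
     \<and> (\<forall>x. \<not> A x x) \<and> (\<forall>x y. A x y \<longrightarrow> \<not> A y x)"

text \<open>Neighbourhoods inside the induced subdigraph on S (take S = V for D itself).\<close>
definition Nout :: "('a \<Rightarrow> 'a \<Rightarrow> bool) \<Rightarrow> 'a set \<Rightarrow> 'a \<Rightarrow> 'a set" where
  "Nout A S v = {u \<in> S. A v u}"

definition Nin :: "('a \<Rightarrow> 'a \<Rightarrow> bool) \<Rightarrow> 'a set \<Rightarrow> 'a \<Rightarrow> 'a set" where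
  "Nin A S v = {u \<in> S. A u v}"

definition Nsec :: "('a \<Rightarrow> 'a \<Rightarrow> bool) \<Rightarrow> 'a set \<Rightarrow> 'a \<Rightarrow> 'a set" where
  "Nsec A S v = {w \<in> S. w \<notin> Nout A S v \<and> w \<noteq> v \<and> (\<exists>u \<in> Nout A S v. A u w)}"

definition missing :: "'a set \<Rightarrow> ('a \<Rightarrow> 'a \<Rightarrow> bool) \<Rightarrow> 'a \<Rightarrow> 'a \<Rightarrow> bool" where
  "missing V A x y \<longleftrightarrow> x \<in> V \<and> y \<in> V \<and> x \<noteq> y \<and> \<not> A x y \<and> \<not> A y x"

text \<open>abc is a component of the missing graph which is a path with exactly the two edges ab, bc.\<close>
definition missing_path :: "'a set \<Rightarrow> ('a \<Rightarrow> 'a \<Rightarrow> bool) \<Rightarrow> 'a \<Rightarrow> 'a \<Rightarrow> 'a \<Rightarrow> bool" where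
  "missing_path V A a b c \<longleftrightarrow> missing V A a b \<and> missing V A b c \<and> a \<noteq> c
     \<and> (\<forall>z. missing V A a z \<longrightarrow> z = b) \<and> (\<forall>z. missing V A c z \<longrightarrow> z = b)
     \<and> (\<forall>z. missing V A b z \<longrightarrow> z = a \<or> z = c)"

text \<open>Tournament missing disjoint paths of length 2: oriented graph whose missing graph is a
  vertex-disjoint union of paths with exactly two edges.\<close>
definition tmdp :: "'a set \<Rightarrow> ('a \<Rightarrow> 'a \<Rightarrow> bool) \<Rightarrow> bool" where
  "tmdp V A \<longleftrightarrow> oriented_graph V A \<and>
     (\<forall>x y. missing V A x y \<longrightarrow>
        (\<exists>a b c. missing_path V A a b c \<and> ({x, y} = {a, b} \<or> {x, y} = {b, c})))"

definition loses :: "'a set \<Rightarrow> ('a \<Rightarrow> 'a \<Rightarrow> bool) \<Rightarrow> 'a set \<Rightarrow> 'a set \<Rightarrow> bool" where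
  "loses V A e e' \<longleftrightarrow> (\<exists>x y a b. e = {x, y} \<and> e' = {a, b} \<and>
      A x a \<and> b \<notin> Nout A V x \<union> Nsec A V x \<and>
      A y b \<and> a \<notin> Nout A V y \<union> Nsec A V y)"

definition path_loses :: "'a set \<Rightarrow> ('a \<Rightarrow> 'a \<Rightarrow> bool) \<Rightarrow> 'a \<Rightarrow> 'a \<Rightarrow> 'a \<Rightarrow> 'a \<Rightarrow> 'a \<Rightarrow> 'a \<Rightarrow> bool" where
  "path_loses V A a b c x y z \<longleftrightarrow>
     loses V A {a, b} {x, y} \<and> loses V A {a, b} {y, z} \<and>
     loses V A {b, c} {x, y} \<and> loses V A {b, c} {y, z}"

text \<open>Double cycle a_0 b_0 c_0, ..., a_(k-1) b_(k-1) c_(k-1) (0-based, indices mod k).\<close>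
definition double_cycle :: "'a set \<Rightarrow> ('a \<Rightarrow> 'a \<Rightarrow> bool) \<Rightarrow> nat \<Rightarrow> (nat \<Rightarrow> 'a) \<Rightarrow> (nat \<Rightarrow> 'a) \<Rightarrow> (nat \<Rightarrow> 'a) \<Rightarrow> bool" where
  "double_cycle V A k a b c \<longleftrightarrow> 2 \<le> k
     \<and> (\<forall>i<k. missing_path V A (a i) (b i) (c i))
     \<and> (\<forall>i<k. \<forall>j<k. i \<noteq> j \<longrightarrow> {a i, b i, c i} \<noteq> {a j, b j, c j})
     \<and> (\<forall>i<k. path_loses V A (a i) (b i) (c i)
                (a (Suc i mod k)) (b (Suc i mod k)) (c (Suc i mod k)))"

definition Kset :: "nat \<Rightarrow> (nat \<Rightarrow> 'a) \<Rightarrow> (nat \<Rightarrow> 'a) \<Rightarrow> (nat \<Rightarrow> 'a) \<Rightarrow> 'a set" where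
  "Kset k a b c = (\<Union>i<k. {a i, b i, c i})"

end

theory Submission
  imports Defs
begin

definition nr :: "('a \<Rightarrow> 'a \<Rightarrow> bool) \<Rightarrow> 'a \<Rightarrow> 'a \<Rightarrow> bool" where
  "nr A x y \<longleftrightarrow> \<not> (\<exists>u. A x u \<and> A u y)"

lemma loses_cases:
  assumes og: "oriented_graph V A"
    and L: "loses V A {p1,p2} {q1,q2}"
    and d: "p1 \<noteq> p2" "q1 \<noteq> q2" "p1 \<noteq> q1" "p1 \<noteq> q2" "p2 \<noteq> q1" "p2 \<noteq> q2"
    and adj: "A p1 q1 \<or> A q1 p1" "A p1 q2 \<or> A q2 p1" "A p2 q1 \<or> A q1 p2" "A p2 q2 \<or> A q2 p2"
  shows "(A p1 q1 \<and> A q1 p2 \<and> A p2 q2 \<and> A q2 p1 \<and> nr A p1 q2 \<and> nr A p2 q1) \<or>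
         (A p1 q2 \<and> A q2 p2 \<and> A p2 q1 \<and> A q1 p1 \<and> nr A p1 q1 \<and> nr A p2 q2)"
proof -
  from L obtain x y u v where e: "{p1,p2} = {x,y}" "{q1,q2} = {u,v}"
    and h1: "A x u" "v \<notin> Nout A V x \<union> Nsec A V x" "A y v" "u \<notin> Nout A V y \<union> Nsec A V y"
    unfolding loses_def by blast
  have inV: "\<And>p q. A p q \<Longrightarrow> p \<in> V \<and> q \<in> V" using og unfolding oriented_graph_def by blast
  have xy: "(x = p1 \<and> y = p2) \<or> (x = p2 \<and> y = p1)" using e(1) d(1) by (metis doubleton_eq_iff)
  have uv: "(u = q1 \<and> v = q2) \<or> (u = q2 \<and> v = q1)" using e(2) d(2) by (metis doubleton_eq_iff)
  have xv: "x \<noteq> v" "y \<noteq> u" using xy uv d by auto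
  have "v \<in> V" "u \<in> V" using inV h1 by auto
  have n1: "\<not> A x v" using h1(2) \<open>v \<in> V\<close> unfolding Nout_def by auto
  have n2: "\<not> A y u" using h1(4) \<open>u \<in> V\<close> unfolding Nout_def by auto
  have r1: "nr A x v" using h1(2) \<open>v \<in> V\<close> n1 xv inV unfolding Nout_def Nsec_def nr_def by blast
  have r2: "nr A y u" using h1(4) \<open>u \<in> V\<close> n2 xv inV unfolding Nout_def Nsec_def nr_def by blast
  show ?thesis using xy uv h1(1,3) n1 n2 r1 r2 adj by auto
qed

locale dc =
  fixes V :: "'a set" and A :: "'a \<Rightarrow> 'a \<Rightarrow> bool"
    and k :: nat and a b c :: "nat \<Rightarrow> 'a"
  assumes tm: "tmdp V A" and dcy: "double_cycle V A k a b c"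
begin

definition P where "P i = {a i, b i, c i}"
definition nxt where "nxt i = Suc i mod k"

lemma og: "oriented_graph V A" using tm unfolding tmdp_def by blast
lemma asym: "A x y \<Longrightarrow> \<not> A y x" using og unfolding oriented_graph_def by blast
lemma irr: "\<not> A x x" using og unfolding oriented_graph_def by blast
lemma arcV: "A x y \<Longrightarrow> x \<in> V \<and> y \<in> V" using og unfolding oriented_graph_def by blast
lemma k2: "2 \<le> k" using dcy unfolding double_cycle_def by blast
lemma mp: "i < k \<Longrightarrow> missing_path V A (a i) (b i) (c i)"
  using dcy unfolding double_cycle_def by blast
lemma msym: "missing V A x y \<longleftrightarrow> missing V A y x" unfolding missing_def by blast

lemma mp_parts:
  assumes "i < k"
  shows "missing V A (a i) (b i)" "missing V A (b i) (c i)" "a i \<noteq> c i"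
    "\<forall>z. missing V A (a i) z \<longrightarrow> z = b i" "\<forall>z. missing V A (c i) z \<longrightarrow> z = b i"
    "\<forall>z. missing V A (b i) z \<longrightarrow> z = a i \<or> z = c i"
  using mp[OF assms] unfolding missing_path_def by simp_all

lemma basic:
  assumes "i < k"
  shows "a i \<in> V" "b i \<in> V" "c i \<in> V" "a i \<noteq> b i" "b i \<noteq> c i" "a i \<noteq> c i"
    "\<not> A (a i) (b i)" "\<not> A (b i) (a i)" "\<not> A (b i) (c i)" "\<not> A (c i) (b i)"
    "missing V A (a i) (b i)" "missing V A (c i) (b i)"
  using mp_parts(1,2,3)[OF assms] unfolding missing_def by auto

lemma miss_a: assumes "i < k" "missing V A (a i) y" shows "y = b i"
  using mp_parts(4)[OF assms(1)] assms(2) by simp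
lemma miss_c: assumes "i < k" "missing V A (c i) y" shows "y = b i"
  using mp_parts(5)[OF assms(1)] assms(2) by simp
lemma miss_b: assumes "i < k" "missing V A (b i) y" shows "y = a i \<or> y = c i"
  using mp_parts(6)[OF assms(1)] assms(2) by simp

lemma miss_in: assumes "i < k" "x \<in> P i" "missing V A x y" shows "y \<in> P i"
proof -
  consider "x = a i" | "x = b i" | "x = c i" using assms(2) unfolding P_def by blast
  then show ?thesis
  proof cases
    case 1 then have "y = b i" using miss_a[OF assms(1)] assms(3) by blast
    then show ?thesis unfolding P_def by simp
  next
    case 2 then have "y = a i \<or> y = c i" using miss_b[OF assms(1)] assms(3) by blast
    then show ?thesis unfolding P_def by blast
  next
    case 3 then have "y = b i" using miss_c[OF assms(1)] assms(3) by blast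
    then show ?thesis unfolding P_def by simp
  qed
qed

lemma disj:
  assumes "i < k" "j < k" "i \<noteq> j" "x \<in> P i" "x \<in> P j"
  shows False
proof -
  have ne: "{a i, b i, c i} \<noteq> {a j, b j, c j}" proof -
    have "\<forall>i<k. \<forall>j<k. i \<noteq> j \<longrightarrow> {a i, b i, c i} \<noteq> {a j, b j, c j}" using dcy unfolding double_cycle_def by (elim conjE)
    then show ?thesis using assms(1-3) by blast
  qed
  have ai: "missing V A (a i) (b i)" "missing V A (c i) (b i)" "missing V A (b i) (a i)" "missing V A (b i) (c i)"
    using basic[OF assms(1)] unfolding missing_def by auto
  have aj: "missing V A (a j) (b j)" "missing V A (c j) (b j)" "missing V A (b j) (a j)" "missing V A (b j) (c j)"
    using basic[OF assms(2)] unfolding missing_def by auto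
  note d = basic[OF assms(1)] basic[OF assms(2)]
  have bb: "b i = b j"
  proof -
    consider "x = a i \<or> x = c i" | "x = b i" using assms(4) unfolding P_def by blast
    then show ?thesis
    proof cases
      case 1
      then have "missing V A x (b i)" using ai by blast
      then consider "x = a j" | "x = c j" | "x = b j" using assms(5) unfolding P_def by blast
      then show ?thesis
      proof cases
        case 1 then show ?thesis using miss_a[OF assms(2)] \<open>missing V A x (b i)\<close> by blast
      next
        case 2 then show ?thesis using miss_c[OF assms(2)] \<open>missing V A x (b i)\<close> by blast
      next
        case 3
        have "missing V A x (a j)" "missing V A x (c j)" using aj 3 by auto
        then have "a j = b i" "c j = b i" using 1 miss_a[OF assms(1)] miss_c[OF assms(1)] by blast+
        then show ?thesis using d by simp
      qed
    next
      case 2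
      have "missing V A x (a i)" "missing V A x (c i)" using ai 2 by auto
      consider "x = a j" | "x = c j" | "x = b j" using assms(5) unfolding P_def by blast
      then show ?thesis
      proof cases
        case 1 then have "a i = b j" "c i = b j" using miss_a[OF assms(2)] \<open>missing V A x (a i)\<close> \<open>missing V A x (c i)\<close> by blast+
        then show ?thesis using d by simp
      next
        case 3 then show ?thesis using 2 by simp
      next
        case 2 then have "a i = b j" "c i = b j" using miss_c[OF assms(2)] \<open>missing V A x (a i)\<close> \<open>missing V A x (c i)\<close> by blast+
        then show ?thesis using d by simp
      qed
    qed
  qed
  have "a i = a j \<or> a i = c j" using miss_b[OF assms(2), of "a i"] ai(3) bb by simp
  moreover have "c i = a j \<or> c i = c j" using miss_b[OF assms(2), of "c i"] ai(4) bb by simp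
  ultimately have "(a i = a j \<and> c i = c j) \<or> (a i = c j \<and> c i = a j)" using basic(6)[OF assms(1)] by metis
  then have "{a i, b i, c i} = {a j, b j, c j}" using bb by (elim disjE conjE) (simp_all add: insert_commute)
  then show False using ne by blast
qed


lemma nxt_lt: "i < k \<Longrightarrow> nxt i < k" unfolding nxt_def using k2 by simp
lemma nxt_ne: assumes "i < k" shows "nxt i \<noteq> i"
proof (cases "Suc i < k")
  case True then show ?thesis unfolding nxt_def by simp
next
  case False then have "Suc i = k" using assms by simp
  then show ?thesis unfolding nxt_def using k2 by simp
qed

lemma inP: "a i \<in> P i" "b i \<in> P i" "c i \<in> P i" unfolding P_def by auto

lemma adj:
  assumes "i < k" "j < k" "i \<noteq> j" "x \<in> P i" "y \<in> P j"
  shows "A x y \<or> A y x"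
proof (rule ccontr)
  assume h: "\<not> (A x y \<or> A y x)"
  have xV: "x \<in> V" "y \<in> V" using assms(4,5) basic[OF assms(1)] basic[OF assms(2)] unfolding P_def by auto
  have "x \<noteq> y" using disj assms by blast
  then have "missing V A x y" using xV h unfolding missing_def by blast
  then have "y \<in> P i" using miss_in assms(1,4) by blast
  then show False using disj assms by blast
qed

lemma typl:
  assumes "i < k"
  defines "s \<equiv> nxt i"
  shows "(A (b i) (b s) \<and> A (b s) (a i) \<and> A (b s) (c i) \<and> A (a i) (a s) \<and> A (a i) (c s) \<and>
          A (c i) (a s) \<and> A (c i) (c s) \<and> A (a s) (b i) \<and> A (c s) (b i) \<and>
          nr A (b i) (a s) \<and> nr A (b i) (c s) \<and> nr A (a i) (b s) \<and> nr A (c i) (b s))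
       \<or> (A (b s) (b i) \<and> A (b i) (a s) \<and> A (b i) (c s) \<and> A (a s) (a i) \<and> A (c s) (a i) \<and>
          A (a s) (c i) \<and> A (c s) (c i) \<and> A (a i) (b s) \<and> A (c i) (b s) \<and>
          nr A (a i) (a s) \<and> nr A (a i) (c s) \<and> nr A (c i) (a s) \<and> nr A (c i) (c s) \<and> nr A (b i) (b s))"
proof -
  have sk: "s < k" "s \<noteq> i" using nxt_lt nxt_ne assms unfolding s_def by auto
  have pl: "path_loses V A (a i) (b i) (c i) (a s) (b s) (c s)"
  proof -
    have "\<forall>i<k. path_loses V A (a i) (b i) (c i) (a (Suc i mod k)) (b (Suc i mod k)) (c (Suc i mod k))"
      using dcy unfolding double_cycle_def by simp
    then show ?thesis using assms(1) unfolding s_def nxt_def by simp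
  qed
  note bi = basic[OF assms(1)] and bs = basic[OF sk(1)]
  have isn: "i \<noteq> s" using sk by simp
  have ne: "\<And>x y. x \<in> P i \<Longrightarrow> y \<in> P s \<Longrightarrow> x \<noteq> y" using disj[OF assms(1) sk(1) isn] by blast
  have ad: "\<And>x y. x \<in> P i \<Longrightarrow> y \<in> P s \<Longrightarrow> A x y \<or> A y x" using adj[OF assms(1) sk(1) isn] by blast
  note inP
  have L1: "loses V A {a i, b i} {a s, b s}" and L2: "loses V A {a i, b i} {b s, c s}"
   and L3: "loses V A {b i, c i} {a s, b s}" and L4: "loses V A {b i, c i} {b s, c s}"
    using pl unfolding path_loses_def by (simp_all only: simp_thms)
  have D1: "(A (a i) (a s) \<and> A (a s) (b i) \<and> A (b i) (b s) \<and> A (b s) (a i) \<and> nr A (a i) (b s) \<and> nr A (b i) (a s)) \<or>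
         (A (a i) (b s) \<and> A (b s) (b i) \<and> A (b i) (a s) \<and> A (a s) (a i) \<and> nr A (a i) (a s) \<and> nr A (b i) (b s))"
    by (rule loses_cases[OF og L1 bi(4) bs(4) ne ne ne ne ad ad ad ad]) (simp_all add: inP)
  have D2: "(A (a i) (b s) \<and> A (b s) (b i) \<and> A (b i) (c s) \<and> A (c s) (a i) \<and> nr A (a i) (c s) \<and> nr A (b i) (b s)) \<or>
         (A (a i) (c s) \<and> A (c s) (b i) \<and> A (b i) (b s) \<and> A (b s) (a i) \<and> nr A (a i) (b s) \<and> nr A (b i) (c s))"
    by (rule loses_cases[OF og L2 bi(4) bs(5) ne ne ne ne ad ad ad ad]) (simp_all add: inP)
  have D3: "(A (b i) (a s) \<and> A (a s) (c i) \<and> A (c i) (b s) \<and> A (b s) (b i) \<and> nr A (b i) (b s) \<and> nr A (c i) (a s)) \<or>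
         (A (b i) (b s) \<and> A (b s) (c i) \<and> A (c i) (a s) \<and> A (a s) (b i) \<and> nr A (b i) (a s) \<and> nr A (c i) (b s))"
    by (rule loses_cases[OF og L3 bi(5) bs(4) ne ne ne ne ad ad ad ad]) (simp_all add: inP)
  have D4: "(A (b i) (b s) \<and> A (b s) (c i) \<and> A (c i) (c s) \<and> A (c s) (b i) \<and> nr A (b i) (c s) \<and> nr A (c i) (b s)) \<or>
         (A (b i) (c s) \<and> A (c s) (c i) \<and> A (c i) (b s) \<and> A (b s) (b i) \<and> nr A (b i) (b s) \<and> nr A (c i) (c s))"
    by (rule loses_cases[OF og L4 bi(5) bs(5) ne ne ne ne ad ad ad ad]) (simp_all add: inP)
  have as: "\<not> (A (b i) (b s) \<and> A (b s) (b i))" using asym by blast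
  have "A (b i) (b s) \<or> A (b s) (b i)" using ad inP by blast
  then show ?thesis
  proof
    assume h: "A (b i) (b s)"
    then have h': "\<not> A (b s) (b i)" using as by blast
    have E1: "A (a i) (a s) \<and> A (a s) (b i) \<and> nr A (a i) (b s) \<and> nr A (b i) (a s)" using D1 h' by (elim disjE) simp_all
    have E2: "A (a i) (c s) \<and> A (c s) (b i) \<and> A (b s) (a i) \<and> nr A (a i) (b s) \<and> nr A (b i) (c s)" using D2 h' by (elim disjE) simp_all
    have E3: "A (b s) (c i) \<and> A (c i) (a s) \<and> nr A (c i) (b s)" using D3 h' by (elim disjE) simp_all
    have E4: "A (c i) (c s) \<and> A (c s) (b i) \<and> nr A (b i) (c s) \<and> nr A (c i) (b s)" using D4 h' by (elim disjE) simp_all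
    show ?thesis using h E1 E2 E3 E4 by (intro disjI1) simp
  next
    assume h: "A (b s) (b i)"
    then have h': "\<not> A (b i) (b s)" using as by blast
    have E1: "A (a i) (b s) \<and> A (b i) (a s) \<and> A (a s) (a i) \<and> nr A (a i) (a s) \<and> nr A (b i) (b s)" using D1 h' by (elim disjE) simp_all
    have E2: "A (a i) (b s) \<and> A (b i) (c s) \<and> A (c s) (a i) \<and> nr A (a i) (c s)" using D2 h' by (elim disjE) simp_all
    have E3: "A (a s) (c i) \<and> A (c i) (b s) \<and> nr A (c i) (a s)" using D3 h' by (elim disjE) simp_all
    have E4: "A (c s) (c i) \<and> A (c i) (b s) \<and> nr A (c i) (c s)" using D4 h' by (elim disjE) simp_all
    show ?thesis using h E1 E2 E3 E4 by (intro disjI2) simp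
  qed
qed


lemma modne: assumes "j < k" "0 < m" "m < k" shows "(j + m) mod k \<noteq> j"
proof (cases "j + m < k")
  case True then show ?thesis using assms by simp
next
  case False
  then have "(j + m) mod k = (j + m - k) mod k" by (simp add: le_mod_geq)
  also have "\<dots> = j + m - k" using assms by simp
  finally show ?thesis using assms False by simp
qed

lemma backl:
  "i < k \<Longrightarrow> j < k \<Longrightarrow> (j + Suc d) mod k = i \<Longrightarrow> Suc d < k \<Longrightarrow> w \<in> P j \<Longrightarrow>
   A w (b i) \<Longrightarrow> A w (a i) \<or> A w (c i) \<Longrightarrow> False"
proof (induction d arbitrary: i)
  case 0
  then have ii: "i = nxt j" unfolding nxt_def by simp
  have wc: "w = a j \<or> w = b j \<or> w = c j" using 0(5) unfolding P_def by blast
  from typl[OF 0(2), unfolded ii[symmetric]] show False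
  proof (elim disjE conjE)
  qed (use wc 0(6,7) in \<open>auto dest: asym\<close>)+
next
  case (Suc d)
  define p where "p = (j + Suc d) mod k"
  have pk: "p < k" unfolding p_def using Suc.prems(1) by simp
  have np: "nxt p = i" unfolding nxt_def p_def using Suc.prems(3) by (simp add: mod_Suc_eq)
  have pj: "p \<noteq> j" unfolding p_def using modne[OF Suc.prems(2), of "Suc d"] Suc.prems(4) by simp
  have ad: "\<And>x. x \<in> P p \<Longrightarrow> A x w \<or> A w x" using adj[OF pk Suc.prems(2) pj] Suc.prems(5) by blast
  have T: "(nr A (b p) (a i) \<and> nr A (b p) (c i) \<and> nr A (a p) (b i))
       \<or> (nr A (a p) (a i) \<and> nr A (a p) (c i) \<and> nr A (b p) (b i))"
    using typl[OF pk, unfolded np] by (elim disjE conjE) simp_all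
  have w1: "A w (a p)"
  proof -
    have "\<not> A (a p) w" using T Suc.prems(6,7) unfolding nr_def by blast
    then show ?thesis using ad inP by blast
  qed
  have w2: "A w (b p)"
  proof -
    have "\<not> A (b p) w" using T Suc.prems(6,7) unfolding nr_def by blast
    then show ?thesis using ad inP by blast
  qed
  show False
    by (rule Suc.IH[OF pk Suc.prems(2) p_def[symmetric] _ Suc.prems(5) w2]) (use Suc.prems(4) w1 in auto)
qed

lemma backl2:
  assumes "i < k" "j < k" "i \<noteq> j" "w \<in> P j" "A w (b i)" "A w (a i) \<or> A w (c i)"
  shows False
proof -
  define m where "m = (i + k - j) mod k"
  have "(j + m) mod k = (j + (i + k - j)) mod k" unfolding m_def by (simp add: mod_add_right_eq)
  also have "\<dots> = (i + k) mod k" using assms(2) by simp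
  also have "\<dots> = i" using assms(1) by simp
  finally have jm: "(j + m) mod k = i" .
  have "m \<noteq> 0"
  proof
    assume "m = 0"
    then have "i = j" using jm assms(2) by simp
    then show False using assms(3) by simp
  qed
  then obtain d where d: "m = Suc d" using not0_implies_Suc by blast
  have "m < k" unfolding m_def using assms(1) by simp
  show False using backl[OF assms(1,2), of d w] jm d \<open>m < k\<close> assms(4-6) by simp
qed


definition KK where "KK = Kset k a b c"

lemma K_iff: "x \<in> KK \<longleftrightarrow> (\<exists>i<k. x \<in> P i)" unfolding KK_def Kset_def P_def by blast
lemma PK: "i < k \<Longrightarrow> x \<in> P i \<Longrightarrow> x \<in> KK" using K_iff by blast
lemma KV: "x \<in> KK \<Longrightarrow> x \<in> V" unfolding K_iff P_def using basic by blast
lemma finK: "finite KK" unfolding KK_def Kset_def by simp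

lemma gen_card:
  assumes vK: "v \<in> KK"
   and F1: "F \<subseteq> Nin A KK v" and F2: "\<forall>f\<in>F. nr A v f"
   and R1: "R \<subseteq> KK" and R2: "\<forall>r\<in>R. missing V A v r" and R3: "\<forall>r\<in>R. \<exists>u\<in>KK. A v u \<and> A u r"
   and R4: "\<forall>z. missing V A v z \<longrightarrow> z \<in> R"
   and G: "\<forall>w\<in>Nin A KK v. w \<notin> F \<longrightarrow> (\<exists>u\<in>KK. A v u \<and> A u w)"
  shows "card (Nsec A KK v) + card F = card (Nin A KK v) + card R"
proof -
  have eq: "Nsec A KK v = (Nin A KK v - F) \<union> R"
  proof (rule set_eqI, rule iffI)
    fix w assume "w \<in> Nsec A KK v"
    then have w: "w \<in> KK" "\<not> A v w" "w \<noteq> v" "\<exists>u\<in>KK. A v u \<and> A u w" unfolding Nsec_def Nout_def by auto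
    show "w \<in> (Nin A KK v - F) \<union> R"
    proof (cases "missing V A v w")
      case True then show ?thesis using R4 by blast
    next
      case False
      then have "A w v" using w(1-3) KV vK unfolding missing_def by blast
      moreover have "w \<notin> F" using F2 w(4) unfolding nr_def by blast
      ultimately show ?thesis using w(1) unfolding Nin_def by blast
    qed
  next
    fix w assume "w \<in> (Nin A KK v - F) \<union> R"
    then show "w \<in> Nsec A KK v"
    proof
      assume h: "w \<in> Nin A KK v - F"
      then have h2: "w \<in> KK" "A w v" unfolding Nin_def by auto
      then have "\<not> A v w" "w \<noteq> v" using asym irr by blast+
      moreover obtain u where "u \<in> KK" "A v u" "A u w" using G h h2 by blast
      ultimately show ?thesis using h2 unfolding Nsec_def Nout_def by blast
    next
      assume h: "w \<in> R"
      then have "w \<in> KK" "\<not> A v w" "w \<noteq> v" using R1 R2 unfolding missing_def by blast+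
      moreover obtain u where "u \<in> KK" "A v u" "A u w" using R3 h by blast
      ultimately show ?thesis unfolding Nsec_def Nout_def by blast
    qed
  qed
  have finN: "finite (Nin A KK v)" using finK unfolding Nin_def by simp
  have finR: "finite R" using finK R1 finite_subset by blast
  have dj: "(Nin A KK v - F) \<inter> R = {}" using R2 unfolding Nin_def missing_def by blast
  have "card (Nsec A KK v) = card (Nin A KK v - F) + card R"
    unfolding eq by (rule card_Un_disjoint) (use finN finR dj in auto)
  moreover have "card (Nin A KK v - F) + card F = card (Nin A KK v)"
    using card_Diff_subset[OF finite_subset[OF F1 finN] F1] card_mono[OF finN F1] by simp
  ultimately show ?thesis by simp
qed

definition TA where "TA i \<longleftrightarrow> (A (b i) (b (nxt i)) \<and> A (b (nxt i)) (a i) \<and> A (b (nxt i)) (c i) \<and> A (a i) (a (nxt i)) \<and> A (a i) (c (nxt i)) \<and>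
          A (c i) (a (nxt i)) \<and> A (c i) (c (nxt i)) \<and> A (a (nxt i)) (b i) \<and> A (c (nxt i)) (b i) \<and>
          nr A (b i) (a (nxt i)) \<and> nr A (b i) (c (nxt i)) \<and> nr A (a i) (b (nxt i)) \<and> nr A (c i) (b (nxt i)))"
definition TB where "TB i \<longleftrightarrow> (A (b (nxt i)) (b i) \<and> A (b i) (a (nxt i)) \<and> A (b i) (c (nxt i)) \<and> A (a (nxt i)) (a i) \<and> A (c (nxt i)) (a i) \<and>
          A (a (nxt i)) (c i) \<and> A (c (nxt i)) (c i) \<and> A (a i) (b (nxt i)) \<and> A (c i) (b (nxt i)) \<and>
          nr A (a i) (a (nxt i)) \<and> nr A (a i) (c (nxt i)) \<and> nr A (c i) (a (nxt i)) \<and> nr A (c i) (c (nxt i)) \<and> nr A (b i) (b (nxt i)))"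

lemma TAB: "i < k \<Longrightarrow> TA i \<or> TB i" unfolding TA_def TB_def using typl by simp

lemma TA_D: assumes "TA i" shows "A (b i) (b (nxt i))" "A (b (nxt i)) (a i)" "A (b (nxt i)) (c i)" "A (a i) (a (nxt i))" "A (a i) (c (nxt i))"
          "A (c i) (a (nxt i))" "A (c i) (c (nxt i))" "A (a (nxt i)) (b i)" "A (c (nxt i)) (b i)"
          "nr A (b i) (a (nxt i))" "nr A (b i) (c (nxt i))" "nr A (a i) (b (nxt i))" "nr A (c i) (b (nxt i))"
  using assms unfolding TA_def by simp_all
lemma TB_D: assumes "TB i" shows "A (b (nxt i)) (b i)" "A (b i) (a (nxt i))" "A (b i) (c (nxt i))" "A (a (nxt i)) (a i)" "A (c (nxt i)) (a i)"
          "A (a (nxt i)) (c i)" "A (c (nxt i)) (c i)" "A (a i) (b (nxt i))" "A (c i) (b (nxt i))"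
          "nr A (a i) (a (nxt i))" "nr A (a i) (c (nxt i))" "nr A (c i) (a (nxt i))" "nr A (c i) (c (nxt i))" "nr A (b i) (b (nxt i))"
  using assms unfolding TB_def by simp_all

lemma far:
  assumes tk: "t < k" and jk: "j < k" and jt: "j \<noteq> t" and js: "j \<noteq> nxt t"
    and wP: "w \<in> P j" and wv: "A w v" and uP: "u \<in> P (nxt t)" and vu: "A v u" and uw: "\<not> A u w"
    and xP: "x \<in> P t" and nx: "nr A x u"
    and cls: "(v = b t \<and> (x = a t \<or> x = c t)) \<or> (x = b t \<and> (v = a t \<or> v = c t))"
  shows False
proof -
  have sk: "nxt t < k" using nxt_lt tk by blast
  have "A w u" using adj[OF jk sk js wP uP] uw by blast
  then have "\<not> A x w" using nx unfolding nr_def by blast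
  then have "A w x" using adj[OF jk tk jt wP xP] by blast
  then show False using backl2[OF tk jk jt[symmetric] wP] wv cls by blast
qed


lemma vb:
  assumes tk: "t < k"
  shows "if b (nxt t) \<in> Nin A KK (b t)
         then card (Nsec A KK (b t)) = card (Nin A KK (b t)) + 1
         else card (Nsec A KK (b t)) = card (Nin A KK (b t))"
proof -
  define s where "s = nxt t"
  have sk: "s < k" "s \<noteq> t" using nxt_lt nxt_ne tk unfolding s_def by auto
  note bt = basic[OF tk] and bs = basic[OF sk(1)]
  have Kt: "a t \<in> KK" "b t \<in> KK" "c t \<in> KK" using PK[OF tk] inP by blast+
  have Ks: "a s \<in> KK" "b s \<in> KK" "c s \<in> KK" using PK[OF sk(1)] inP by blast+
  have R2: "\<forall>r\<in>{a t, c t}. missing V A (b t) r" using bt unfolding missing_def by auto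
  have R4: "\<forall>z. missing V A (b t) z \<longrightarrow> z \<in> {a t, c t}" using miss_b[OF tk] by blast
  have cR: "card {a t, c t} = 2" using bt by simp
  have Gt: "\<And>w. w \<in> P t \<Longrightarrow> \<not> A w (b t)" using bt irr unfolding P_def by blast
  from TAB[OF tk] show ?thesis
  proof
    assume T: "TA t"
    note TT = TA_D[OF T, folded s_def]
    have G: "\<forall>w\<in>Nin A KK (b t). w \<notin> {a s, c s} \<longrightarrow> (\<exists>u\<in>KK. A (b t) u \<and> A u w)"
    proof (intro ballI impI)
      fix w assume w: "w \<in> Nin A KK (b t)" "w \<notin> {a s, c s}"
      then have wK: "w \<in> KK" and wv: "A w (b t)" unfolding Nin_def by auto
      then obtain j where j: "j < k" "w \<in> P j" using K_iff by blast
      show "\<exists>u\<in>KK. A (b t) u \<and> A u w"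
      proof (rule ccontr)
        assume nu: "\<not> (\<exists>u\<in>KK. A (b t) u \<and> A u w)"
        have jt: "j \<noteq> t" using Gt j wv by blast
        have js: "j \<noteq> s"
        proof
          assume "j = s"
          then have "w = b s" using j(2) w(2) unfolding P_def by blast
          then show False using wv TT(1) asym by blast
        qed
        show False
          by (rule far[OF tk j(1) jt js[unfolded s_def] j(2) wv, of "b s" "a t"])
             (use nu TT Ks inP in \<open>auto simp: s_def\<close>)
      qed
    qed
    have "card (Nsec A KK (b t)) + card {a s, c s} = card (Nin A KK (b t)) + card {a t, c t}"
      by (rule gen_card[OF Kt(2) _ _ _ R2 _ R4 G])
         (use TT Ks Kt in \<open>auto simp: Nin_def\<close>)
    moreover have "card {a s, c s} = 2" using bs by simp
    moreover have "b s \<notin> Nin A KK (b t)" using TT(1) asym unfolding Nin_def by blast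
    ultimately show ?thesis using cR unfolding s_def by simp
  next
    assume T: "TB t"
    note TT = TB_D[OF T, folded s_def]
    have G: "\<forall>w\<in>Nin A KK (b t). w \<notin> {b s} \<longrightarrow> (\<exists>u\<in>KK. A (b t) u \<and> A u w)"
    proof (intro ballI impI)
      fix w assume w: "w \<in> Nin A KK (b t)" "w \<notin> {b s}"
      then have wK: "w \<in> KK" and wv: "A w (b t)" unfolding Nin_def by auto
      then obtain j where j: "j < k" "w \<in> P j" using K_iff by blast
      show "\<exists>u\<in>KK. A (b t) u \<and> A u w"
      proof (rule ccontr)
        assume nu: "\<not> (\<exists>u\<in>KK. A (b t) u \<and> A u w)"
        have jt: "j \<noteq> t" using Gt j wv by blast
        have js: "j \<noteq> s"
        proof
          assume "j = s"
          then have "w = a s \<or> w = c s" using j(2) w(2) unfolding P_def by blast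
          then show False using wv TT(2,3) asym by blast
        qed
        show False
          by (rule far[OF tk j(1) jt js[unfolded s_def] j(2) wv, of "a s" "a t"])
             (use nu TT Ks inP in \<open>auto simp: s_def\<close>)
      qed
    qed
    have "card (Nsec A KK (b t)) + card {b s} = card (Nin A KK (b t)) + card {a t, c t}"
      by (rule gen_card[OF Kt(2) _ _ _ R2 _ R4 G])
         (use TT Ks Kt in \<open>auto simp: Nin_def\<close>)
    moreover have "b s \<in> Nin A KK (b t)" using TT(1) Ks unfolding Nin_def by blast
    ultimately show ?thesis using cR unfolding s_def by simp
  qed
qed


lemma vac:
  assumes tk: "t < k" and vo: "(v = a t \<and> ov = c t) \<or> (v = c t \<and> ov = a t)"
    and ho: "ov \<notin> Nin A KK v"
  shows "if b (nxt t) \<in> Nin A KK v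
         then card (Nsec A KK v) = card (Nin A KK v)
         else card (Nsec A KK v) + 1 = card (Nin A KK v)"
proof -
  define s where "s = nxt t"
  have sk: "s < k" "s \<noteq> t" using nxt_lt nxt_ne tk unfolding s_def by auto
  note bt = basic[OF tk] and bs = basic[OF sk(1)]
  have Kt: "a t \<in> KK" "b t \<in> KK" "c t \<in> KK" using PK[OF tk] inP by blast+
  have Ks: "a s \<in> KK" "b s \<in> KK" "c s \<in> KK" using PK[OF sk(1)] inP by blast+
  have vK: "v \<in> KK" using vo Kt by blast
  have vP: "v \<in> P t" using vo inP by blast
  have nov: "\<not> A ov v" using ho vo Kt unfolding Nin_def by blast
  have R2: "\<forall>r\<in>{b t}. missing V A v r" using bt vo by auto
  have R4: "\<forall>z. missing V A v z \<longrightarrow> z \<in> {b t}" using miss_a[OF tk] miss_c[OF tk] vo by blast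
  have Gt: "\<And>w. w \<in> P t \<Longrightarrow> A w v \<Longrightarrow> False"
  proof -
    fix w assume "w \<in> P t" "A w v"
    then consider "w = v" | "w = b t" | "w = ov" using vo unfolding P_def by blast
    then show False
    proof cases
      case 1 then show False using \<open>A w v\<close> irr by blast
    next
      case 2 then show False using \<open>A w v\<close> bt vo by blast
    next
      case 3 then show False using \<open>A w v\<close> nov by blast
    qed
  qed
  have cls: "v = a t \<or> v = c t" using vo by blast
  from TAB[OF tk] show ?thesis
  proof
    assume T: "TA t"
    note TT = TA_D[OF T, folded s_def]
    have G: "\<forall>w\<in>Nin A KK v. w \<notin> {b s} \<longrightarrow> (\<exists>u\<in>KK. A v u \<and> A u w)"
    proof (intro ballI impI)
      fix w assume w: "w \<in> Nin A KK v" "w \<notin> {b s}"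
      then have wK: "w \<in> KK" and wv: "A w v" unfolding Nin_def by auto
      then obtain j where j: "j < k" "w \<in> P j" using K_iff by blast
      show "\<exists>u\<in>KK. A v u \<and> A u w"
      proof (rule ccontr)
        assume nu: "\<not> (\<exists>u\<in>KK. A v u \<and> A u w)"
        have jt: "j \<noteq> t" using Gt j wv by blast
        have js: "j \<noteq> s"
        proof
          assume "j = s"
          then have "w = a s \<or> w = c s" using j(2) w(2) unfolding P_def by blast
          then show False using wv TT(4-7) cls asym by blast
        qed
        have vu: "A v (a s)" using TT(4,6) cls by blast
        show False
          by (rule far[OF tk j(1) jt js[unfolded s_def] j(2) wv, of "a s" "b t"])
             (use nu TT Ks inP vu cls in \<open>auto simp: s_def\<close>)
      qed
    qed
    have "card (Nsec A KK v) + card {b s} = card (Nin A KK v) + card {b t}"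
    proof (rule gen_card[OF vK _ _ _ R2 _ R4 G])
      show "{b s} \<subseteq> Nin A KK v" using TT(2,3) Ks cls unfolding Nin_def by blast
      show "\<forall>f\<in>{b s}. nr A v f" using TT(12,13) cls by blast
      show "{b t} \<subseteq> KK" using Kt by blast
      show "\<forall>r\<in>{b t}. \<exists>u\<in>KK. A v u \<and> A u r" using TT(4,6,8) Ks cls by blast
    qed
    moreover have "b s \<in> Nin A KK v" using TT(2,3) Ks cls unfolding Nin_def by blast
    ultimately show ?thesis unfolding s_def by simp
  next
    assume T: "TB t"
    note TT = TB_D[OF T, folded s_def]
    have G: "\<forall>w\<in>Nin A KK v. w \<notin> {a s, c s} \<longrightarrow> (\<exists>u\<in>KK. A v u \<and> A u w)"
    proof (intro ballI impI)
      fix w assume w: "w \<in> Nin A KK v" "w \<notin> {a s, c s}"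
      then have wK: "w \<in> KK" and wv: "A w v" unfolding Nin_def by auto
      then obtain j where j: "j < k" "w \<in> P j" using K_iff by blast
      show "\<exists>u\<in>KK. A v u \<and> A u w"
      proof (rule ccontr)
        assume nu: "\<not> (\<exists>u\<in>KK. A v u \<and> A u w)"
        have jt: "j \<noteq> t" using Gt j wv by blast
        have js: "j \<noteq> s"
        proof
          assume "j = s"
          then have "w = b s" using j(2) w(2) unfolding P_def by blast
          then show False using wv TT(8,9) cls asym by blast
        qed
        have vu: "A v (b s)" using TT(8,9) cls by blast
        show False
          by (rule far[OF tk j(1) jt js[unfolded s_def] j(2) wv, of "b s" "b t"])
             (use nu TT Ks inP vu cls in \<open>auto simp: s_def\<close>)
      qed
    qed
    have "card (Nsec A KK v) + card {a s, c s} = card (Nin A KK v) + card {b t}"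
    proof (rule gen_card[OF vK _ _ _ R2 _ R4 G])
      show "{a s, c s} \<subseteq> Nin A KK v" using TT(4-7) Ks cls unfolding Nin_def by blast
      show "\<forall>f\<in>{a s, c s}. nr A v f" using TT(10-13) cls by blast
      show "{b t} \<subseteq> KK" using Kt by blast
      show "\<forall>r\<in>{b t}. \<exists>u\<in>KK. A v u \<and> A u r" using TT(1,8,9) Ks cls by blast
    qed
    moreover have "card {a s, c s} = 2" using bs by simp
    moreover have "b s \<notin> Nin A KK v" using TT(8,9) cls asym unfolding Nin_def by blast
    ultimately show ?thesis unfolding s_def by simp
  qed
qed

end

theorem mainTheorem18:
  fixes V :: "'a set" and A :: "'a \<Rightarrow> 'a \<Rightarrow> bool"
    and k :: nat and a b c :: "nat \<Rightarrow> 'a" and t :: nat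
  assumes "tmdp V A"
    and "double_cycle V A k a b c"
    and "t < k"
  defines "K \<equiv> Kset k a b c"
  shows "(c t \<notin> Nin A K (a t) \<longrightarrow>
            (if b (Suc t mod k) \<in> Nin A K (a t)
             then card (Nsec A K (a t)) = card (Nin A K (a t))
             else card (Nsec A K (a t)) + 1 = card (Nin A K (a t))))
       \<and> (a t \<notin> Nin A K (c t) \<longrightarrow>
            (if b (Suc t mod k) \<in> Nin A K (c t)
             then card (Nsec A K (c t)) = card (Nin A K (c t))
             else card (Nsec A K (c t)) + 1 = card (Nin A K (c t))))
       \<and> (if b (Suc t mod k) \<in> Nin A K (b t)
             then card (Nsec A K (b t)) = card (Nin A K (b t)) + 1
             else card (Nsec A K (b t)) = card (Nin A K (b t)))"
proof -
  interpret dc V A k a b c using assms(1,2) by unfold_locales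
  have KK: "K = KK" unfolding K_def KK_def ..
  have n: "Suc t mod k = nxt t" unfolding nxt_def ..
  have c1: "c t \<notin> Nin A KK (a t) \<longrightarrow> (if b (nxt t) \<in> Nin A KK (a t)
             then card (Nsec A KK (a t)) = card (Nin A KK (a t))
             else card (Nsec A KK (a t)) + 1 = card (Nin A KK (a t)))"
    using vac[OF assms(3), of "a t" "c t"] by blast
  have c2: "a t \<notin> Nin A KK (c t) \<longrightarrow> (if b (nxt t) \<in> Nin A KK (c t)
             then card (Nsec A KK (c t)) = card (Nin A KK (c t))
             else card (Nsec A KK (c t)) + 1 = card (Nin A KK (c t)))"
    using vac[OF assms(3), of "c t" "a t"] by blast
  show ?thesis unfolding KK n using c1 c2 vb[OF assms(3)] by blast
qed

end
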